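(* Fix an integer $k\geq1$ and $V=\{0,\ldots,k\}$. If a Boolean function $\varphi$ on $V$ satisfies $\mathrm{eul}(\varphi)=0$, then $\varphi$ is fragmentable.
   Context: A valuation is a subset $\nu\subseteq V$; $\nu^{(l)}$ is $\nu$ with membership of $l$ flipped. A Boolean function on $V$ is a map $\varphi:2^V\to\{\text{false},\text{true}\}$; $\mathrm{eul}(\varphi)=\sum_{\nu:\varphi(\nu)=\text{true}}(-1)^{|\nu|}$. $\varphi$ is degenerate if there is $l\in V$ with $\varphi(\nu)=\varphi(\nu^{(l)})$ for all $\nu$. Two functions are disjoint if no valuation satisfies both. A $\neg$-$\vee$-template is a Boolean circuit all of whose internal gates are $\neg$- or $\vee$-gates (a single leaf is allowed); its leaves $l_0,\ldots,l_n$ are holes. $T[\varphi_0,\ldots,\varphi_n]$ is the function obtained by substituting $\varphi_i$ for $l_i$; it is deterministic if, for every $\vee$-gate of the template, any two distinct inputs compute disjoint functions. $\varphi$ is fragmentable if there exist a $\neg$-$\vee$-template $T$ and degenerate functions $\varphi_0,\ldots,\varphi_n$ (one per hole) such that $T[\varphi_0,\ldots,\varphi_n]$ is deterministic and equivalent to $\varphi$. *)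

theory Defs
  imports Main
begin

text \<open>Valuations are subsets of V (here represented as sets of naturals);
a Boolean function on V is a map from valuations to bool, of which only the
values on subsets of V are relevant.\<close>

definition flip :: "nat set \<Rightarrow> nat \<Rightarrow> nat set" where
  "flip \<nu> l = (if l \<in> \<nu> then \<nu> - {l} else insert l \<nu>)"

definition eul :: "nat set \<Rightarrow> (nat set \<Rightarrow> bool) \<Rightarrow> int" where
  "eul V \<phi> = (\<Sum>\<nu> \<in> {\<nu>. \<nu> \<subseteq> V \<and> \<phi> \<nu>}. (-1) ^ card \<nu>)"

definition degenerate :: "nat set \<Rightarrow> (nat set \<Rightarrow> bool) \<Rightarrow> bool" where
  "degenerate V \<phi> = (\<exists>l \<in> V. \<forall>\<nu>. \<nu> \<subseteq> V \<longrightarrow> \<phi> \<nu> = \<phi> (flip \<nu> l))"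

definition disjoint_fun :: "nat set \<Rightarrow> (nat set \<Rightarrow> bool) \<Rightarrow> (nat set \<Rightarrow> bool) \<Rightarrow> bool" where
  "disjoint_fun V f g = (\<forall>\<nu>. \<nu> \<subseteq> V \<longrightarrow> \<not> (f \<nu> \<and> g \<nu>))"

definition equiv_fun :: "nat set \<Rightarrow> (nat set \<Rightarrow> bool) \<Rightarrow> (nat set \<Rightarrow> bool) \<Rightarrow> bool" where
  "equiv_fun V f g = (\<forall>\<nu>. \<nu> \<subseteq> V \<longrightarrow> f \<nu> = g \<nu>)"

text \<open>Negation-disjunction templates (unfolded into trees; shared gates of a
circuit are duplicated, which does not change the class of fragmentable
functions).\<close>

datatype tmpl = Hole nat | NegT tmpl | OrT "tmpl list"

fun holes :: "tmpl \<Rightarrow> nat set" where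
  "holes (Hole i) = {i}"
| "holes (NegT t) = holes t"
| "holes (OrT ts) = (\<Union>t \<in> set ts. holes t)"

fun eval_t :: "(nat \<Rightarrow> nat set \<Rightarrow> bool) \<Rightarrow> tmpl \<Rightarrow> nat set \<Rightarrow> bool" where
  "eval_t \<psi> (Hole i) \<nu> = \<psi> i \<nu>"
| "eval_t \<psi> (NegT t) \<nu> = (\<not> eval_t \<psi> t \<nu>)"
| "eval_t \<psi> (OrT ts) \<nu> = (\<exists>t \<in> set ts. eval_t \<psi> t \<nu>)"

fun deterministic :: "nat set \<Rightarrow> (nat \<Rightarrow> nat set \<Rightarrow> bool) \<Rightarrow> tmpl \<Rightarrow> bool" where
  "deterministic V \<psi> (Hole i) = True"
| "deterministic V \<psi> (NegT t) = deterministic V \<psi> t"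
| "deterministic V \<psi> (OrT ts) =
     ((\<forall>t \<in> set ts. deterministic V \<psi> t) \<and>
      (\<forall>i < length ts. \<forall>j < length ts. i \<noteq> j \<longrightarrow>
          disjoint_fun V (eval_t \<psi> (ts ! i)) (eval_t \<psi> (ts ! j))))"

definition fragmentable :: "nat set \<Rightarrow> (nat set \<Rightarrow> bool) \<Rightarrow> bool" where
  "fragmentable V \<phi> = (\<exists>T \<psi>. (\<forall>i \<in> holes T. degenerate V (\<psi> i))
      \<and> deterministic V \<psi> T \<and> equiv_fun V (eval_t \<psi> T) \<phi>)"

end

theory Submission
  imports Defs
begin

fun ren :: "(nat \<Rightarrow> nat) \<Rightarrow> tmpl \<Rightarrow> tmpl" where
  "ren f (Hole i) = Hole (f i)"
| "ren f (NegT t) = NegT (ren f t)"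
| "ren f (OrT ts) = OrT (map (ren f) ts)"

lemma eval_ren: "eval_t \<psi> (ren f t) = eval_t (\<lambda>a. \<psi> (f a)) t"
  by (induction t) auto

lemma holes_ren: "holes (ren f t) = f ` holes t"
  by (induction t) auto

lemma det_ren: "deterministic V \<psi> (ren f t) = deterministic V (\<lambda>a. \<psi> (f a)) t"
  by (induction t) (auto simp: eval_ren)

lemma frag_equiv:
  assumes "fragmentable V A" "equiv_fun V A B" shows "fragmentable V B"
  using assms unfolding fragmentable_def equiv_fun_def by metis

lemma frag_neg:
  assumes "fragmentable V A" shows "fragmentable V (\<lambda>x. \<not> A x)"
proof -
  obtain T \<psi> where h: "\<forall>i \<in> holes T. degenerate V (\<psi> i)" "deterministic V \<psi> T"
    "equiv_fun V (eval_t \<psi> T) A" using assms unfolding fragmentable_def by blast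
  show ?thesis unfolding fragmentable_def
    apply (rule exI[of _ "NegT T"], rule exI[of _ \<psi>])
    using h by (auto simp: equiv_fun_def)
qed

lemma frag_deg:
  assumes "degenerate V A" shows "fragmentable V A"
  unfolding fragmentable_def
  apply (rule exI[of _ "Hole 0"], rule exI[of _ "\<lambda>_. A"])
  using assms by (auto simp: equiv_fun_def)

lemma frag_or:
  assumes "fragmentable V A" "fragmentable V B" "disjoint_fun V A B"
  shows "fragmentable V (\<lambda>x. A x \<or> B x)"
proof -
  obtain T1 \<psi>1 where h1: "\<forall>i \<in> holes T1. degenerate V (\<psi>1 i)" "deterministic V \<psi>1 T1"
    "equiv_fun V (eval_t \<psi>1 T1) A" using assms(1) unfolding fragmentable_def by blast
  obtain T2 \<psi>2 where h2: "\<forall>i \<in> holes T2. degenerate V (\<psi>2 i)" "deterministic V \<psi>2 T2"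
    "equiv_fun V (eval_t \<psi>2 T2) B" using assms(2) unfolding fragmentable_def by blast
  define \<psi> where "\<psi> = (\<lambda>j::nat. if even j then \<psi>1 (j div 2) else \<psi>2 (j div 2))"
  have e1: "\<And>x. \<psi> (2*x) = \<psi>1 x" by (simp add: \<psi>_def)
  have e2: "\<And>x. \<psi> (Suc (2*x)) = \<psi>2 x" by (simp add: \<psi>_def)
  define T where "T = OrT [ren (\<lambda>i. 2*i) T1, ren (\<lambda>i. Suc (2*i)) T2]"
  have d12: "disjoint_fun V (eval_t \<psi>1 T1) (eval_t \<psi>2 T2)"
    using assms(3) h1(3) h2(3) by (auto simp: disjoint_fun_def equiv_fun_def)
  hence d21: "disjoint_fun V (eval_t \<psi>2 T2) (eval_t \<psi>1 T1)"
    by (auto simp: disjoint_fun_def)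
  have E1: "eval_t \<psi> (ren (\<lambda>i. 2*i) T1) = eval_t \<psi>1 T1" by (simp add: eval_ren e1)
  have E2: "eval_t \<psi> (ren (\<lambda>i. Suc (2*i)) T2) = eval_t \<psi>2 T2" by (simp add: eval_ren e2)
  have D1: "deterministic V \<psi> (ren (\<lambda>i. 2*i) T1)" using h1(2) by (simp add: det_ren e1)
  have D2: "deterministic V \<psi> (ren (\<lambda>i. Suc (2*i)) T2)" using h2(2) by (simp add: det_ren e2)
  have det: "deterministic V \<psi> T"
    unfolding T_def using D1 D2 d12 d21 by (auto simp: E1 E2 less_Suc_eq)
  have hol: "\<forall>i \<in> holes T. degenerate V (\<psi> i)"
    unfolding T_def using h1(1) h2(1) by (auto simp: holes_ren \<psi>_def)
  have eq: "equiv_fun V (eval_t \<psi> T) (\<lambda>x. A x \<or> B x)"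
    unfolding T_def using h1(3) h2(3) by (auto simp: E1 E2 equiv_fun_def)
  show ?thesis unfolding fragmentable_def using det hol eq by blast
qed

lemma flip_flip: "flip (flip x l) l = x"
  by (auto simp: flip_def)

lemma flip_sub: "x \<subseteq> V \<Longrightarrow> l \<in> V \<Longrightarrow> flip x l \<subseteq> V"
  by (auto simp: flip_def)

definition sd :: "nat set \<Rightarrow> nat set \<Rightarrow> nat set" where
  "sd a b = (a - b) \<union> (b - a)"

lemma sd_flip: "a \<in> sd x y \<Longrightarrow> sd (flip x a) y = sd x y - {a}"
  by (auto simp: sd_def flip_def)

lemma adj_frag:
  assumes "a \<in> V" shows "fragmentable V (\<lambda>x. x = \<nu> \<or> x = flip \<nu> a)"
proof -
  have "degenerate V (\<lambda>x. x = \<nu> \<or> x = flip \<nu> a)"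
    unfolding degenerate_def using assms by (metis flip_flip)
  then show ?thesis by (rule frag_deg)
qed

lemma pair_frag:
  assumes "finite V"
  shows "\<And>\<nu> \<mu>. \<nu> \<subseteq> V \<Longrightarrow> \<mu> \<subseteq> V \<Longrightarrow> card (sd \<nu> \<mu>) = 2*n+1 \<Longrightarrow>
     fragmentable V (\<lambda>x. x = \<nu> \<or> x = \<mu>)"
proof (induction n)
  case 0
  have "card (sd \<nu> \<mu>) = 1" using 0(3) by simp
  then obtain a where a: "sd \<nu> \<mu> = {a}" by (rule card_1_singletonE)
  have m: "\<And>x. x \<noteq> a \<Longrightarrow> (x \<in> \<nu> \<longleftrightarrow> x \<in> \<mu>)"
  proof -
    fix x assume "x \<noteq> a"
    hence "x \<notin> sd \<nu> \<mu>" using a by simp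
    thus "x \<in> \<nu> \<longleftrightarrow> x \<in> \<mu>" unfolding sd_def by blast
  qed
  have ma: "a \<in> \<nu> \<longleftrightarrow> a \<notin> \<mu>"
  proof -
    have "a \<in> sd \<nu> \<mu>" using a by simp
    thus ?thesis unfolding sd_def by blast
  qed
  have aV: "a \<in> V" using ma 0(1,2) by blast
  have "\<mu> = flip \<nu> a" unfolding flip_def using m ma by (auto; metis)
  then show ?case using adj_frag[OF aV] by simp
next
  case (Suc n)
  have fin: "finite (sd \<nu> \<mu>)" using Suc.prems assms by (auto simp: sd_def intro: finite_subset)
  have "sd \<nu> \<mu> \<noteq> {}" using Suc.prems(3) by (intro notI) simp
  then obtain a where a: "a \<in> sd \<nu> \<mu>" by blast
  define \<nu>1 where "\<nu>1 = flip \<nu> a"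
  have s1: "sd \<nu>1 \<mu> = sd \<nu> \<mu> - {a}" using a sd_flip \<nu>1_def by blast
  have c1: "card (sd \<nu>1 \<mu>) = 2*n+2" using s1 a fin Suc.prems(3) by simp
  have "sd \<nu>1 \<mu> \<noteq> {}" using c1 by (intro notI) simp
  then obtain b where b: "b \<in> sd \<nu>1 \<mu>" by blast
  define \<nu>2 where "\<nu>2 = flip \<nu>1 b"
  have s2: "sd \<nu>2 \<mu> = sd \<nu>1 \<mu> - {b}" using b sd_flip \<nu>2_def by blast
  have fin1: "finite (sd \<nu>1 \<mu>)" using s1 fin by simp
  have c2: "card (sd \<nu>2 \<mu>) = 2*n+1" using s2 b fin1 c1 by simp
  have aV: "a \<in> V" and bV: "b \<in> V" using a b s1 Suc.prems by (auto simp: sd_def)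
  have V1: "\<nu>1 \<subseteq> V" using \<nu>1_def flip_sub Suc.prems aV by blast
  have V2: "\<nu>2 \<subseteq> V" using \<nu>2_def flip_sub V1 bV by blast
  have ab: "a \<noteq> b" using b s1 by auto
  have n01: "\<nu> \<noteq> \<nu>1" unfolding \<nu>1_def flip_def by auto
  have n12: "\<nu>1 \<noteq> \<nu>2" unfolding \<nu>2_def flip_def by auto
  have n02: "\<nu> \<noteq> \<nu>2" using ab unfolding \<nu>2_def \<nu>1_def flip_def by auto
  have n0m: "\<nu> \<noteq> \<mu>" using Suc.prems(3) by (auto simp: sd_def)
  have n1m: "\<nu>1 \<noteq> \<mu>" using c1 by (auto simp: sd_def)
  have n2m: "\<nu>2 \<noteq> \<mu>" using c2 by (auto simp: sd_def)
  have F1: "fragmentable V (\<lambda>x. x = \<nu>2 \<or> x = \<mu>)" using Suc.IH[OF V2 Suc.prems(2) c2] .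
  have F2: "fragmentable V (\<lambda>x. x = \<nu> \<or> x = \<nu>1)"
    using adj_frag[OF aV] \<nu>1_def by simp
  have F3: "fragmentable V (\<lambda>x. x = \<nu>1 \<or> x = \<nu>2)"
    using adj_frag[OF bV] \<nu>2_def by simp
  have F4: "fragmentable V (\<lambda>x. (x = \<nu>2 \<or> x = \<mu>) \<or> (x = \<nu> \<or> x = \<nu>1))"
    by (rule frag_or[OF F1 F2]) (use n01 n02 n0m n12 n1m n2m in \<open>auto simp: disjoint_fun_def\<close>)
  have F5: "fragmentable V (\<lambda>x. \<not> ((x = \<nu>2 \<or> x = \<mu>) \<or> (x = \<nu> \<or> x = \<nu>1)))"
    by (rule frag_neg[OF F4])
  have F6: "fragmentable V (\<lambda>x. \<not> ((x = \<nu>2 \<or> x = \<mu>) \<or> (x = \<nu> \<or> x = \<nu>1)) \<or> (x = \<nu>1 \<or> x = \<nu>2))"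
    by (rule frag_or[OF F5 F3]) (auto simp: disjoint_fun_def)
  show ?case
    by (rule frag_equiv[OF frag_neg[OF F6]]) (use n01 n02 n0m n12 n1m n2m in \<open>auto simp: equiv_fun_def\<close>)
qed


lemma card_sd:
  assumes "finite a" "finite b"
  shows "card a + card b = 2 * card (a \<inter> b) + card (sd a b)"
proof -
  have 1: "card a = card (a \<inter> b) + card (a - b)"
    using assms by (metis card_Int_Diff)
  have 2: "card b = card (a \<inter> b) + card (b - a)"
    using assms by (metis card_Int_Diff inf_commute)
  have 3: "card (sd a b) = card (a - b) + card (b - a)"
    unfolding sd_def using assms by (intro card_Un_disjoint) auto
  show ?thesis using 1 2 3 by simp
qed

lemma main_ind:
  assumes "finite V" "V \<noteq> {}"
  shows "\<And>\<phi>. card {\<nu>. \<nu> \<subseteq> V \<and> \<phi> \<nu>} = n \<Longrightarrow> eul V \<phi> = 0 \<Longrightarrow> fragmentable V \<phi>"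
proof (induction n rule: less_induct)
  case (less n \<phi>)
  define S where "S = {\<nu>. \<nu> \<subseteq> V \<and> \<phi> \<nu>}"
  have finS: "finite S" unfolding S_def
    by (rule finite_subset[of _ "Pow V"]) (use assms(1) in auto)
  have eulS: "(\<Sum>\<nu>\<in>S. (-1::int) ^ card \<nu>) = 0" using less.prems(2) unfolding eul_def S_def .
  show ?case
  proof (cases "S = {}")
    case True
    obtain l where l: "l \<in> V" using assms(2) by blast
    have "degenerate V (\<lambda>_. False)" unfolding degenerate_def using l by blast
    hence "fragmentable V (\<lambda>_. False)" by (rule frag_deg)
    moreover have "equiv_fun V (\<lambda>_. False) \<phi>" using True unfolding S_def equiv_fun_def by auto
    ultimately show ?thesis by (rule frag_equiv)
  next
    case False
    have "\<exists>\<mu>\<in>S. odd (card \<mu>)"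
    proof (rule ccontr)
      assume "\<not> ?thesis"
      hence "(\<Sum>\<nu>\<in>S. (-1::int) ^ card \<nu>) = (\<Sum>\<nu>\<in>S. 1)" by (intro sum.cong) auto
      also have "\<dots> = int (card S)" by simp
      also have "\<dots> > 0" using False finS by (simp add: card_gt_0_iff)
      finally show False using eulS by simp
    qed
    then obtain \<mu> where \<mu>: "\<mu> \<in> S" "odd (card \<mu>)" by blast
    have "\<exists>\<nu>\<in>S. even (card \<nu>)"
    proof (rule ccontr)
      assume "\<not> ?thesis"
      hence "(\<Sum>\<nu>\<in>S. (-1::int) ^ card \<nu>) = (\<Sum>\<nu>\<in>S. -1)" by (intro sum.cong) auto
      also have "\<dots> = - int (card S)" by simp
      also have "\<dots> < 0" using False finS by (simp add: card_gt_0_iff)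
      finally show False using eulS by simp
    qed
    then obtain \<nu> where \<nu>: "\<nu> \<in> S" "even (card \<nu>)" by blast
    have nm: "\<nu> \<noteq> \<mu>" using \<mu> \<nu> by auto
    define \<phi>' where "\<phi>' = (\<lambda>x. \<phi> x \<and> x \<noteq> \<nu> \<and> x \<noteq> \<mu>)"
    have S': "{x. x \<subseteq> V \<and> \<phi>' x} = S - {\<nu>} - {\<mu>}" unfolding \<phi>'_def S_def by auto
    have \<mu>': "\<mu> \<in> S - {\<nu>}" using \<mu> nm by auto
    have cS: "card (S - {\<nu>} - {\<mu>}) < n"
    proof -
      have "card (S - {\<nu>} - {\<mu>}) < card (S - {\<nu>})" using \<mu>' finS by (intro card_Diff1_less) auto
      also have "\<dots> < card S" using \<nu> finS by (intro card_Diff1_less) auto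
      finally show ?thesis using less.prems(1) S_def by simp
    qed
    have "(\<Sum>x\<in>S. (-1::int) ^ card x) = (-1) ^ card \<nu> + ((-1) ^ card \<mu> + (\<Sum>x\<in>S - {\<nu>} - {\<mu>}. (-1) ^ card x))"
    proof -
      have r1: "(\<Sum>x\<in>S. (-1::int) ^ card x) = (-1) ^ card \<nu> + (\<Sum>x\<in>S - {\<nu>}. (-1) ^ card x)"
        by (rule sum.remove[OF finS \<nu>(1)])
      have r2: "(\<Sum>x\<in>S - {\<nu>}. (-1::int) ^ card x) = (-1) ^ card \<mu> + (\<Sum>x\<in>S - {\<nu>} - {\<mu>}. (-1) ^ card x)"
        by (rule sum.remove) (use finS \<mu>' in auto)
      show ?thesis by (simp only: r1 r2)
    qed
    hence "(\<Sum>x\<in>S - {\<nu>} - {\<mu>}. (-1::int) ^ card x) = 0" using eulS \<mu>(2) \<nu>(2) by simp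
    hence eul': "eul V \<phi>' = 0" unfolding eul_def S' .
    have F1: "fragmentable V \<phi>'" using less.IH[OF _ refl eul'] cS S' by simp
    have fin\<nu>: "finite \<nu>" and fin\<mu>: "finite \<mu>" and sub\<nu>: "\<nu> \<subseteq> V" and sub\<mu>: "\<mu> \<subseteq> V"
      using \<mu> \<nu> assms(1) unfolding S_def by (auto intro: finite_subset)
    have "odd (card (sd \<nu> \<mu>))" using card_sd[OF fin\<nu> fin\<mu>] \<mu>(2) \<nu>(2)
      by (metis even_add even_mult_iff even_numeral)
    then obtain m where m: "card (sd \<nu> \<mu>) = 2*m+1" by (metis oddE)
    have F2: "fragmentable V (\<lambda>x. x = \<nu> \<or> x = \<mu>)" using pair_frag[OF assms(1) sub\<nu> sub\<mu> m] .
    have F3: "fragmentable V (\<lambda>x. \<phi>' x \<or> (x = \<nu> \<or> x = \<mu>))"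
      by (rule frag_or[OF F1 F2]) (auto simp: disjoint_fun_def \<phi>'_def)
    show ?thesis
      by (rule frag_equiv[OF F3]) (use \<mu> \<nu> in \<open>auto simp: equiv_fun_def \<phi>'_def S_def\<close>)
  qed
qed

theorem proposition5p1:
  fixes k :: nat and \<phi> :: "nat set \<Rightarrow> bool"
  assumes "k \<ge> 1"
    and "eul {0..k} \<phi> = 0"
  shows "fragmentable {0..k} \<phi>"
  using main_ind[OF _ _ refl assms(2)] by simp

end
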